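(* Let $A>0$, $\sigma>0$ and integer $K\ge2$. Then $$\mathsf{F}(A,K,\sigma)\ \ge\ R_{\rm OWB}(A,K,\sigma):=\log K-\tfrac12\log\Bigl(\tfrac{2\pi e}{12}\Bigr)-\tfrac12\log\Bigl(1+\tfrac{12(K-1)^2\sigma^2}{A^2}\Bigr).$$
   Context: All logarithms are base 2. $\mathsf{F}(A,K,\sigma)=\max\{\mathsf{F}_1,\mathsf{F}_2,\mathsf{F}_3\}(A,K,\sigma)$ with $\mathsf{F}_1(A,K,\sigma)=\log K-H(\xi_{A,K})-\xi_{A,K}\log(K-1)$, $\xi_{A,K}=\frac{2(K-1)}{K}\mathsf{Q}(\frac{A}{2(K-1)\sigma})$; $\mathsf{F}_2(A,K,\sigma)=\underline{C}(\frac{KA}{K-1},\sigma)-\mathsf{E}(\frac{A}{K-1},\sigma)$; $\mathsf{F}_3(A,K,\sigma)=-\log\bigl(\sum_{i,j=1}^K\frac{\sqrt{e/2}}{K^2}e^{-\frac{(i-j)^2A^2}{4(K-1)^2\sigma^2}}\bigr)$. Here $H(p)$ is the binary entropy function, $\mathsf{Q}$ the standard Gaussian tail function, and for $a>0$: $\underline{C}(a,\sigma)=\frac12\log(1+\frac{a^2}{2\pi e\sigma^2})$, $\overline{C}(a,\sigma)=\min\{\frac12\log(1+\frac{a^2}{4\sigma^2}),\log(1+\frac{a}{\sqrt{2\pi e}\sigma})\}$, $\mathsf{E}(a,\sigma)=\min\{\overline{C}(a,\sigma),\frac12\log(1+\frac{a^2}{12\sigma^2})\}$. *)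

theory Defs
  imports "HOL-Probability.Probability"
begin

definition gaussQ :: "real \<Rightarrow> real" where
  "gaussQ x = (LINT t:{x<..}|lborel. std_normal_density t)"

definition binH :: "real \<Rightarrow> real" where
  "binH p = (if p \<le> 0 \<or> p \<ge> 1 then 0 else - p * log 2 p - (1 - p) * log 2 (1 - p))"

definition xiAK :: "real \<Rightarrow> nat \<Rightarrow> real \<Rightarrow> real" where
  "xiAK A K \<sigma> = 2 * (real K - 1) / real K * gaussQ (A / (2 * (real K - 1) * \<sigma>))"

definition F1 :: "real \<Rightarrow> nat \<Rightarrow> real \<Rightarrow> real" where
  "F1 A K \<sigma> = log 2 (real K) - binH (xiAK A K \<sigma>) - xiAK A K \<sigma> * log 2 (real K - 1)"

definition Clow :: "real \<Rightarrow> real \<Rightarrow> real" where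
  "Clow a \<sigma> = 1/2 * log 2 (1 + a^2 / (2 * pi * exp 1 * \<sigma>^2))"

definition Cup :: "real \<Rightarrow> real \<Rightarrow> real" where
  "Cup a \<sigma> = min (1/2 * log 2 (1 + a^2 / (4 * \<sigma>^2)))
                  (log 2 (1 + a / (sqrt (2 * pi * exp 1) * \<sigma>)))"

definition Efun :: "real \<Rightarrow> real \<Rightarrow> real" where
  "Efun a \<sigma> = min (Cup a \<sigma>) (1/2 * log 2 (1 + a^2 / (12 * \<sigma>^2)))"

definition F2 :: "real \<Rightarrow> nat \<Rightarrow> real \<Rightarrow> real" where
  "F2 A K \<sigma> = Clow (real K * A / (real K - 1)) \<sigma> - Efun (A / (real K - 1)) \<sigma>"

definition F3 :: "real \<Rightarrow> nat \<Rightarrow> real \<Rightarrow> real" where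
  "F3 A K \<sigma> = - log 2 (\<Sum>i\<in>{1..K}. \<Sum>j\<in>{1..K}.
      sqrt (exp 1 / 2) / (real K)^2 *
      exp (- ((real i - real j)^2 * A^2) / (4 * (real K - 1)^2 * \<sigma>^2)))"

definition Ffun :: "real \<Rightarrow> nat \<Rightarrow> real \<Rightarrow> real" where
  "Ffun A K \<sigma> = max (F1 A K \<sigma>) (max (F2 A K \<sigma>) (F3 A K \<sigma>))"

definition R_OWB :: "real \<Rightarrow> nat \<Rightarrow> real \<Rightarrow> real" where
  "R_OWB A K \<sigma> = log 2 (real K) - 1/2 * log 2 (2 * pi * exp 1 / 12)
     - 1/2 * log 2 (1 + 12 * (real K - 1)^2 * \<sigma>^2 / A^2)"

end

theory Submission
  imports Defs
begin

theorem mainTheorem3: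
  fixes A \<sigma> :: real and K :: nat
  assumes "A > 0" and "\<sigma> > 0" and "K \<ge> 2"
  shows "Ffun A K \<sigma> \<ge> R_OWB A K \<sigma>"
proof -
  define a where "a = A / (real K - 1)"
  have K1: "real K - 1 > 0" using assms(3) by simp
  have a0: "a > 0" using assms(1) K1 by (simp add: a_def)
  define c where "c = 2 * pi * exp 1"
  have c0: "c > 0" by (simp add: c_def)
  define u where "u = (real K * a)^2 / (c * \<sigma>^2)"
  define v where "v = a^2 / (12 * \<sigma>^2)"
  have u0: "u > 0" using a0 assms c0 by (simp add: u_def)
  have v0: "v > 0" using a0 assms by (simp add: v_def)
  have inv: "12 * (real K - 1)^2 * \<sigma>^2 / A^2 = 1 / v"
    using K1 assms a0 by (simp add: v_def a_def field_simps)
  have uv: "u * (c/12) / v = (real K)^2"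
    using c0 assms a0 by (simp add: u_def v_def field_simps power2_eq_square)
  have F2ge: "F2 A K \<sigma> \<ge> 1/2 * log 2 (1+u) - 1/2 * log 2 (1+v)"
    unfolding F2_def Clow_def Efun_def
    by (simp add: u_def v_def c_def a_def power_mult_distrib mult.assoc)
  have R: "R_OWB A K \<sigma> = log 2 (real K) - 1/2 * log 2 (c/12) - 1/2 * log 2 (1 + 1/v)"
    unfolding R_OWB_def inv c_def by simp
  have key: "(real K)^2 * (1+v) \<le> (1+u) * (c/12) * ((1+v)/v)"
  proof -
    have "(real K)^2 * (1+v) = u * (c/12) * ((1+v)/v)" using uv v0 by (simp add: field_simps)
    also have "\<dots> \<le> (1+u) * (c/12) * ((1+v)/v)"
      using c0 v0 by (intro mult_right_mono) auto
    finally show ?thesis .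
  qed
  have Kp: "real K > 0" using assms(3) by simp
  have L: "log 2 ((real K)^2 * (1+v)) \<le> log 2 ((1+u) * (c/12) * ((1+v)/v))"
    using key Kp v0 u0 c0 by (intro log_le_cancel_iff[THEN iffD2]) auto
  have "2 * log 2 (real K) + log 2 (1+v) \<le> log 2 (1+u) + log 2 (c/12) + log 2 (1 + 1/v)"
  proof -
    have e1: "log 2 ((real K)^2 * (1+v)) = 2 * log 2 (real K) + log 2 (1+v)"
      using Kp v0 by (simp add: log_mult log_nat_power)
    have e2: "log 2 ((1+u) * (c/12) * ((1+v)/v)) = log 2 (1+u) + log 2 (c/12) + log 2 ((1+v)/v)"
      using u0 v0 c0 log_mult[of 2 "(1+u) * (c/12)" "(1+v)/v"] log_mult[of 2 "1+u" "c/12"] by simp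
    have e3: "(1+v)/v = 1 + 1/v" using v0 by (simp add: field_simps)
    show ?thesis using L e1 e2 e3 by simp
  qed
  hence "R_OWB A K \<sigma> \<le> F2 A K \<sigma>" using F2ge R by linarith
  thus ?thesis unfolding Ffun_def by linarith
qed

end
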